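(* Let $v\geq 8$, let $C_v$ be the configuration on $\mathbb{Z}_v$ with blocks $\{m,m+1,m+3\}$, $m\in\mathbb{Z}_v$, and let $S$ be a blocking set of $C_v$, with associated circular binary word $\mathbf{b}(S)=b_0\cdots b_{v-1}$ ($b_i=1$ iff $i\in S$). Then either (a) $\mathbf{b}(S)$ alternates $0101\cdots$ or $1010\cdots$ (which is possible only if $v$ is even), or (b) $\mathbf{b}(S)$ consists of runs of 0s and runs of 1s each of length 2 or 3.
   Context: A blocking set is a subset $Q$ of the points such that every block contains at least one point of $Q$ and at least one point not in $Q$. A circular binary word of length $n$ is a sequence $b_0,\dots,b_{n-1}\in\{0,1\}$ with indices taken modulo $n$. A run of length $k$ is a maximal sequence of $k$ cyclically consecutive equal digits (bounded on both sides by the other digit). *)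

theory Defs
  imports Main
begin

text \<open>Z_v is represented by {0..<v} (type nat), arithmetic mod v.\<close>

definition Cv_blocks :: "nat \<Rightarrow> nat set set" where
  "Cv_blocks v = {{m, (m + 1) mod v, (m + 3) mod v} | m. m < v}"

definition blocking_set :: "'a set \<Rightarrow> 'a set set \<Rightarrow> 'a set \<Rightarrow> bool" where
  "blocking_set P B Q \<longleftrightarrow> Q \<subseteq> P \<and> (\<forall>blk\<in>B. (\<exists>x\<in>blk. x \<in> Q) \<and> (\<exists>x\<in>blk. x \<notin> Q))"

definition word :: "nat \<Rightarrow> nat set \<Rightarrow> nat \<Rightarrow> bool" where
  "word v S i \<longleftrightarrow> i mod v \<in> S"

definition is_run :: "nat \<Rightarrow> (nat \<Rightarrow> bool) \<Rightarrow> nat \<Rightarrow> nat \<Rightarrow> bool" where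
  "is_run v b i k \<longleftrightarrow> i < v \<and> 0 < k \<and> k < v \<and>
     b ((i + v - 1) mod v) \<noteq> b i \<and> b ((i + k) mod v) \<noteq> b i \<and>
     (\<forall>t<k. b ((i + t) mod v) = b i)"

definition alternating :: "nat \<Rightarrow> (nat \<Rightarrow> bool) \<Rightarrow> bool" where
  "alternating v b \<longleftrightarrow> (\<forall>i<v. b ((i + 1) mod v) \<noteq> b i)"

definition runs_2_or_3 :: "nat \<Rightarrow> (nat \<Rightarrow> bool) \<Rightarrow> bool" where
  "runs_2_or_3 v b \<longleftrightarrow>
     (\<forall>i<v. \<exists>j k. is_run v b j k \<and> (\<exists>t<k. (j + t) mod v = i)) \<and>
     (\<forall>j k. is_run v b j k \<longrightarrow> k = 2 \<or> k = 3)"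

end

theory Submission
  imports Defs
begin

lemma word_mod: "x mod v = y mod v \<Longrightarrow> word v S x = word v S y"
  by (simp add: word_def)

lemma word_K:
  assumes "v > 0" and "blocking_set {..<v} (Cv_blocks v) S"
  shows "\<not> (word v S m = word v S (m+1) \<and> word v S m = word v S (m+3))"
proof
  assume h: "word v S m = word v S (m+1) \<and> word v S m = word v S (m+3)"
  let ?blk = "{m mod v, (m mod v + 1) mod v, (m mod v + 3) mod v}"
  have "?blk \<in> Cv_blocks v" unfolding Cv_blocks_def using assms(1) by auto
  with assms(2) obtain x y where x: "x \<in> ?blk" "x \<in> S" and y: "y \<in> ?blk" "y \<notin> S"
    unfolding blocking_set_def by blast
  have e1: "(m mod v + 1) mod v = (m+1) mod v" by (metis mod_add_left_eq)
  have e3: "(m mod v + 3) mod v = (m+3) mod v" by (simp add: mod_add_left_eq)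
  have "\<forall>z\<in>?blk. (z \<in> S) = word v S m"
    using h e1 e3 by (auto simp: word_def)
  with x y show False by blast
qed

lemma prev_mod: "(v::nat) > 0 \<Longrightarrow> j \<ge> 1 \<Longrightarrow> (j mod v + v - 1) mod v = (j - 1) mod v"
proof -
  assume "v > 0" "j \<ge> 1"
  have "(j mod v + v - 1) mod v = (j mod v + (v - 1)) mod v" proof -
    have "j mod v + v - 1 = j mod v + (v - 1)" using \<open>v>0\<close> by (simp add: Nat.add_diff_assoc)
    thus ?thesis by simp
  qed
  also have "\<dots> = (j + (v-1)) mod v" by (simp add: mod_add_left_eq)
  also have "j + (v-1) = (j - 1) + v" using \<open>v>0\<close> \<open>j\<ge>1\<close> by simp
  finally show ?thesis by simp
qed

theorem mainTheorem5:
  fixes v :: nat and S :: "nat set"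
  assumes "v \<ge> 8"
    and "blocking_set {..<v} (Cv_blocks v) S"
  shows "alternating v (word v S) \<or> runs_2_or_3 v (word v S)"
proof -
  define B where "B = word v S"
  have v0: "v > 0" using assms(1) by simp
  have K: "\<And>m. \<not> (B m = B (m+1) \<and> B m = B (m+3))"
    unfolding B_def using word_K[OF v0 assms(2)] by blast
  have Bm: "\<And>x. B (x mod v) = B x" unfolding B_def by (simp add: word_def)
  have Bv: "\<And>x. B (x + v) = B x" unfolding B_def by (simp add: word_def)
  have Bkv: "\<And>x k. B (x + k * v) = B x"
  proof -
    fix x k show "B (x + k * v) = B x"
      by (induction k) (simp_all, metis Bv add.commute add.left_commute)
  qed
  define P where "P j \<longleftrightarrow> B j \<noteq> B (j+1) \<and> B (j+1) \<noteq> B (j+2)" for j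
  show ?thesis
  proof (cases "\<exists>n. P n")
    case True
    then obtain n where n: "P n" by blast
    have step: "P (j+1) \<Longrightarrow> P j" for j
      using K[of j] unfolding P_def by (auto simp: numeral_3_eq_3)
    have down: "P (j + d) \<Longrightarrow> P j" for j d
      by (induction d) (auto, metis step add_Suc_right Suc_eq_plus1)
    have allP: "P j" for j
    proof -
      have "j \<le> n + j * v" using v0 by (simp add: trans_le_add2)
      then obtain d where "n + j * v = j + d" using le_Suc_ex by blast
      moreover have "P (n + j * v)" using n Bkv unfolding P_def
        by (metis add.assoc add.commute)
      ultimately show ?thesis using down by metis
    qed
    have "alternating v B"
      unfolding alternating_def
    proof (intro allI impI)
      fix i assume "i < v"
      show "B ((i + 1) mod v) \<noteq> B i" using allP[of i] Bm unfolding P_def by metis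
    qed
    then show ?thesis unfolding B_def by simp
  next
    case False
    hence NS: "\<And>j. B j \<noteq> B (j+1) \<Longrightarrow> B (j+1) = B (j+2)" unfolding P_def by blast
    have runat: "is_run v B (j mod v) k \<longleftrightarrow>
        (0 < k \<and> k < v \<and> B (j - 1) \<noteq> B j \<and> B (j + k) \<noteq> B j \<and> (\<forall>t<k. B (j + t) = B j))"
      if "j \<ge> 1" for j k
    proof -
      have a: "B ((j mod v + v - 1) mod v) = B (j - 1)"
        using prev_mod[OF v0 that] Bm by metis
      have b: "B ((j mod v + k) mod v) = B (j + k)" for k
        by (metis Bm mod_add_left_eq)
      show ?thesis unfolding is_run_def using a b Bm v0 by auto
    qed
    have cover: "\<exists>j k. is_run v B j k \<and> (\<exists>t<k. (j + t) mod v = i)" if "i < v" for i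
    proof -
      define p where "p = i + 2 * v"
      have p3: "p \<ge> 3" using assms(1) unfolding p_def by simp
      have pm: "p mod v = i" unfolding p_def using that by simp
      have cov: "\<exists>t<k. ((j mod v) + t) mod v = i" if "j + s = p" "s < k" for j s k
        using that pm by (metis mod_add_left_eq)
      have K': "\<And>m. B m = B (m+1) \<Longrightarrow> B (m+3) \<noteq> B m" using K by blast
      consider (a) "B (p-1) \<noteq> B p" | (b) "B (p-1) = B p" "B (p-2) \<noteq> B (p-1)"
        | (c) "B (p-1) = B p" "B (p-2) = B (p-1)" by blast
      then show ?thesis
      proof cases
        case a
        have e: "p - 1 + 1 = p" "p - 1 + 2 = p + 1" using p3 by auto
        have b1: "B (p+1) = B p" using NS[of "p-1"] a e by simp
        show ?thesis
        proof (cases "B (p+2) = B p")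
          case True
          have "B (p+3) \<noteq> B p" using K'[of p] b1 by simp
          hence "is_run v B (p mod v) 3" using runat[of p 3] p3 assms(1) a b1 True
            by (auto simp: less_Suc_eq numeral_3_eq_3)
          then show ?thesis using cov[of p 0 3] by auto
        next
          case False
          hence "is_run v B (p mod v) 2" using runat[of p 2] p3 assms(1) a b1
            by (auto simp: less_Suc_eq numeral_2_eq_2)
          then show ?thesis using cov[of p 0 2] by auto
        qed
      next
        case b
        have e: "p - 1 - 1 = p - 2" "p - 1 + 1 = p" "p - 1 + 2 = p + 1" "p - 1 + 3 = p + 2"
          using p3 by auto
        show ?thesis
        proof (cases "B (p+1) = B p")
          case True
          have "B (p+2) \<noteq> B p" using K'[of "p-1"] b e by simp
          hence "is_run v B ((p-1) mod v) 3" using runat[of "p-1" 3] p3 assms(1) b True e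
            by (auto simp: less_Suc_eq numeral_3_eq_3)
          then show ?thesis using cov[of "p-1" 1 3] p3 by auto
        next
          case False
          hence "is_run v B ((p-1) mod v) 2" using runat[of "p-1" 2] p3 assms(1) b e
            by (auto simp: less_Suc_eq numeral_2_eq_2)
          then show ?thesis using cov[of "p-1" 1 2] p3 by auto
        qed
      next
        case c
        have e: "p - 2 - 1 = p - 3" "p - 3 + 1 = p - 2" "p - 3 + 3 = p"
          "p - 2 + 1 = p - 1" "p - 2 + 2 = p" "p - 2 + 3 = p + 1" "p - 2 + 0 = p - 2"
          using p3 by auto
        have K3: "\<not>(B (p-3) = B (p-2) \<and> B (p-3) = B p)" using K[of "p-3"] unfolding e by blast
        have x1: "B (p-3) \<noteq> B (p-2)" using K3 c by auto
        have x2: "B (p+1) \<noteq> B (p-2)" using K'[of "p-2"] c e by auto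
        have "\<forall>t<3. B (p - 2 + t) = B (p - 2)" using c e by (auto simp: less_Suc_eq numeral_3_eq_3)
        hence R3: "is_run v B ((p-2) mod v) 3" using runat[of "p-2" 3] p3 assms(1) x1 x2 e
          by auto
        have "p - 2 + 2 = p" using p3 by simp
        from cov[OF this, of 3] have "\<exists>t<3. ((p-2) mod v + t) mod v = i" by simp
        with R3 have "is_run v B ((p-2) mod v) 3 \<and> (\<exists>t<3. ((p-2) mod v + t) mod v = i)" by blast
        then show ?thesis by (rule exI[where x="(p-2) mod v", OF exI[where x=3]])
      qed
    qed
    have len: "k = 2 \<or> k = 3" if r: "is_run v B j k" for j k
    proof -
      have jv: "j < v" using r unfolding is_run_def by simp
      have r': "is_run v B ((j + v) mod v) k" using r jv by simp
      have R: "0 < k \<and> k < v \<and> B (j + v - 1) \<noteq> B (j + v) \<and> B (j + v + k) \<noteq> B (j + v)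
          \<and> (\<forall>t<k. B (j + v + t) = B (j + v))"
        using runat[of "j+v" k] r' v0 by simp
      show ?thesis
      proof (rule ccontr)
        assume "\<not> (k = 2 \<or> k = 3)"
        then consider "k = 1" | "k \<ge> 4" using R by linarith
        then show False
        proof cases
          case 1
          then show False using NS[of "j+v-1"] R v0 by simp
        next
          case 2
          have "B (j+v+1) = B (j+v)" "B (j+v+3) = B (j+v)"
          proof -
            have a: "1 < k" "3 < k" using 2 by simp_all
            from R have "\<forall>t<k. B (j + v + t) = B (j + v)" by blast
            with a show "B (j+v+1) = B (j+v)" "B (j+v+3) = B (j+v)" by blast+
          qed
          then show False using K[of "j+v"] by simp
        qed
      qed
    qed
    have "runs_2_or_3 v B" unfolding runs_2_or_3_def using cover len by blast
    then show ?thesis unfolding B_def by simp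
  qed
qed

end
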